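(* Let $t,k,n$ be positive integers with $t\le k\le n$ and $n\ge (t+1)(k-t+1)$. Let $\mathcal F=\{F\in\binom{[n]}{k}:[t]\subseteq F\}$ and $\mathcal G=\mathcal A(n,k,t)=\{G\in\binom{[n]}{k}: |G\cap[t+2]|\ge t+1\}$. Then ${\rm co}_2(\mathcal G)\le{\rm co}_2(\mathcal F)$, and equality holds only if $k=t+1$ and $n=2t+2$; in this case $\mathcal F\cong\mathcal G^c=\{[n]\setminus G: G\in\mathcal G\}$.
   Context: For $\mathcal H\subseteq\binom{[n]}{k}$ and $E\subseteq[n]$, $d(E)=|\{H\in\mathcal H:E\subseteq H\}|$, and ${\rm co}_2(\mathcal H)=\sum_{E\in\binom{[n]}{k-1}}d(E)^2$. $\cong$ means equality up to a permutation of $[n]$. *)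

theory Defs
  imports Main
begin

definition deg :: "nat set set \<Rightarrow> nat set \<Rightarrow> nat" where
  "deg H E = card {F \<in> H. E \<subseteq> F}"

definition co2 :: "nat \<Rightarrow> nat \<Rightarrow> nat set set \<Rightarrow> nat" where
  "co2 n k H = (\<Sum>E \<in> {E. E \<subseteq> {1..n} \<and> card E = k - 1}. (deg H E)^2)"

definition ksubsets :: "nat \<Rightarrow> nat \<Rightarrow> nat set set" where
  "ksubsets n k = {F. F \<subseteq> {1..n} \<and> card F = k}"

definition iso_fam :: "nat \<Rightarrow> nat set set \<Rightarrow> nat set set \<Rightarrow> bool" where
  "iso_fam n A B = (\<exists>\<sigma>. bij_betw \<sigma> {1..n} {1..n} \<and> (\<lambda>X. \<sigma> ` X) ` A = B)"

end

theory Submission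
  imports Defs
begin

lemma count_split:
  assumes "finite U" "S \<subseteq> U" "i \<le> c"
  shows "card {E. E \<subseteq> U \<and> card E = c \<and> card (E \<inter> S) = i}
       = (card S choose i) * (card (U - S) choose (c - i))"
proof -
  let ?PA = "{A. A \<subseteq> S \<and> card A = i}"
  let ?PB = "{B. B \<subseteq> U - S \<and> card B = c - i}"
  have fS: "finite S" using assms finite_subset by blast
  have fUS: "finite (U - S)" using assms by simp
  have eq: "{E. E \<subseteq> U \<and> card E = c \<and> card (E \<inter> S) = i} = (\<lambda>(A,B). A \<union> B) ` (?PA \<times> ?PB)"
  proof (rule set_eqI, rule iffI)
    fix E assume "E \<in> {E. E \<subseteq> U \<and> card E = c \<and> card (E \<inter> S) = i}"
    hence E: "E \<subseteq> U" "card E = c" "card (E \<inter> S) = i" by auto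
    have fE: "finite E" using E(1) assms(1) finite_subset by blast
    have "card E = card (E \<inter> S) + card (E - S)"
      using fE by (metis card_Int_Diff)
    hence "card (E - S) = c - i" using E by simp
    moreover have "E = (E \<inter> S) \<union> (E - S)" by blast
    ultimately show "E \<in> (\<lambda>(A,B). A \<union> B) ` (?PA \<times> ?PB)"
      using E by (intro image_eqI[where x="(E \<inter> S, E - S)"]) auto
  next
    fix E assume "E \<in> (\<lambda>(A,B). A \<union> B) ` (?PA \<times> ?PB)"
    then obtain A B where AB: "A \<subseteq> S" "card A = i" "B \<subseteq> U - S" "card B = c - i" "E = A \<union> B" by auto
    have fA: "finite A" using AB fS finite_subset by blast
    have fB: "finite B" using AB fUS finite_subset by blast
    have "A \<inter> B = {}" using AB by auto
    hence "card E = card A + card B" using card_Un_disjoint[OF fA fB] AB(5) by simp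
    moreover have "E \<inter> S = A" using AB by auto
    ultimately show "E \<in> {E. E \<subseteq> U \<and> card E = c \<and> card (E \<inter> S) = i}"
      using AB assms by auto
  qed
  have inj: "inj_on (\<lambda>(A,B). A \<union> B) (?PA \<times> ?PB)"
  proof (rule inj_onI, clarsimp)
    fix A B A' B' assume h: "A \<subseteq> S" "B \<subseteq> U - S" "A' \<subseteq> S" "B' \<subseteq> U - S" "A \<union> B = A' \<union> B'"
    have "A = (A \<union> B) \<inter> S" "A' = (A' \<union> B') \<inter> S" using h by auto
    moreover have "B = (A \<union> B) - S" "B' = (A' \<union> B') - S" using h by auto
    ultimately show "A = A' \<and> B = B'" using h(5) by metis
  qed
  show ?thesis
    unfolding eq using inj fS fUS
    by (simp add: card_image card_cartesian_product n_subsets)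
qed

definition fam :: "nat \<Rightarrow> nat \<Rightarrow> nat set \<Rightarrow> nat \<Rightarrow> nat set set" where
  "fam n k S r = {X \<in> ksubsets n k. card S \<le> card (X \<inter> S) + r}"

lemma card_insert_Int:
  assumes "finite E" "x \<notin> E"
  shows "card (insert x E \<inter> S) = card (E \<inter> S) + (if x \<in> S then 1 else 0)"
proof (cases "x \<in> S")
  case True
  hence "insert x E \<inter> S = insert x (E \<inter> S)" by auto
  thus ?thesis using True assms by simp
next
  case False
  hence "insert x E \<inter> S = E \<inter> S" by auto
  thus ?thesis using False by simp
qed

lemma deg_fam:
  assumes S: "S \<subseteq> {1..n}" and E: "E \<subseteq> {1..n}" "card E = k - 1" and k: "1 \<le> k" "k \<le> n"
  shows "deg (fam n k S r) E = (if card S \<le> card (E \<inter> S) + r then n - k + 1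
           else if card S = card (E \<inter> S) + r + 1 then r + 1 else 0)"
proof -
  let ?P = "\<lambda>x. card S \<le> card (insert x E \<inter> S) + r"
  have fE: "finite E" using E finite_subset by blast
  have fS: "finite S" using S finite_subset by blast
  have eq: "{X \<in> fam n k S r. E \<subseteq> X} = (\<lambda>x. insert x E) ` {x \<in> {1..n} - E. ?P x}"
  proof (rule set_eqI, rule iffI)
    fix X assume "X \<in> {X \<in> fam n k S r. E \<subseteq> X}"
    hence X: "X \<subseteq> {1..n}" "card X = k" "card S \<le> card (X \<inter> S) + r" "E \<subseteq> X"
      by (auto simp: fam_def ksubsets_def)
    have fX: "finite X" using X finite_subset by blast
    have "card (X - E) = card X - card E" using fE X(4) by (simp add: card_Diff_subset)
    hence "card (X - E) = 1" using X E k by simp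
    then obtain x where x: "X - E = {x}" using card_1_singletonE by blast
    hence "X = insert x E" using X(4) by blast
    moreover have "x \<in> {1..n} - E" using x X by auto
    ultimately show "X \<in> (\<lambda>x. insert x E) ` {x \<in> {1..n} - E. ?P x}" using X by auto
  next
    fix X assume "X \<in> (\<lambda>x. insert x E) ` {x \<in> {1..n} - E. ?P x}"
    then obtain x where x: "x \<in> {1..n}" "x \<notin> E" "?P x" "X = insert x E" by auto
    have "card X = k" using x fE E k by simp
    thus "X \<in> {X \<in> fam n k S r. E \<subseteq> X}" using x E by (auto simp: fam_def ksubsets_def)
  qed
  have inj: "inj_on (\<lambda>x. insert x E) {x \<in> {1..n} - E. ?P x}"
    proof (rule inj_onI)
    fix x y assume "x \<in> {x \<in> {1..n} - E. ?P x}" "y \<in> {x \<in> {1..n} - E. ?P x}" "insert x E = insert y E"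
    thus "x = y" by blast
  qed
  have d: "deg (fam n k S r) E = card {x \<in> {1..n} - E. ?P x}"
    unfolding deg_def eq using inj by (simp add: card_image)
  have Pc: "?P x = (card S \<le> card (E \<inter> S) + (if x \<in> S then 1 else 0) + r)" if "x \<notin> E" for x
    using card_insert_Int[OF fE that] by simp
  have cE: "card ({1..n} - E) = n - k + 1"
    using E k by (simp add: card_Diff_subset fE)
  have cSE: "card (S - E) = card S - card (E \<inter> S)"
    using card_Diff_subset_Int[of S E] fE by (simp add: Int_commute)
  show ?thesis
  proof (cases "card S \<le> card (E \<inter> S) + r")
    case True
    hence "{x \<in> {1..n} - E. ?P x} = {1..n} - E" using Pc by auto
    thus ?thesis using d cE True by simp
  next
    case F1: False
    show ?thesis
    proof (cases "card S = card (E \<inter> S) + r + 1")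
      case True
      have "{x \<in> {1..n} - E. ?P x} = S - E"
      proof (rule set_eqI)
        fix x show "x \<in> {x \<in> {1..n} - E. ?P x} \<longleftrightarrow> x \<in> S - E"
          using Pc[of x] F1 True S by (cases "x \<in> S"; cases "x \<in> E") auto
      qed
      thus ?thesis using d cSE True F1 by simp
    next
      case False
      have "{x \<in> {1..n} - E. ?P x} = {}"
      proof (rule set_eqI)
        fix x show "x \<in> {x \<in> {1..n} - E. ?P x} \<longleftrightarrow> x \<in> {}"
          using Pc[of x] F1 False by (cases "x \<in> S"; cases "x \<in> E") auto
      qed
      thus ?thesis using d F1 False by simp
    qed
  qed
qed

lemma co2_fam:
  assumes S: "S \<subseteq> {1..n}" and k: "1 \<le> k" "k \<le> n"
  shows "co2 n k (fam n k S r) = (\<Sum>i\<in>{0..card S}.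
     (if card S \<le> i + r then n - k + 1 else if card S = i + r + 1 then r + 1 else 0)^2 *
     (if i \<le> k - 1 then (card S choose i) * ((n - card S) choose (k - 1 - i)) else 0))"
proof -
  define val where "val i = (if card S \<le> i + r then n - k + 1 else if card S = i + r + 1 then r + 1 else 0)" for i
  let ?Ek = "{E. E \<subseteq> {1..n} \<and> card E = k - 1}"
  have fS: "finite S" using S finite_subset by blast
  have fEk: "finite ?Ek" by (rule finite_subset[of _ "Pow {1..n}"]) auto
  have "co2 n k (fam n k S r) = (\<Sum>E\<in>?Ek. (val (card (E \<inter> S)))^2)"
    unfolding co2_def val_def by (rule sum.cong) (auto simp: deg_fam[OF S _ _ k])
  also have "\<dots> = (\<Sum>i\<in>{0..card S}. \<Sum>E\<in>{E \<in> ?Ek. card (E \<inter> S) = i}. (val (card (E \<inter> S)))^2)"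
  proof (rule sum.group[symmetric, OF fEk])
    show "(\<lambda>E. card (E \<inter> S)) ` ?Ek \<subseteq> {0..card S}" using fS by (auto intro: card_mono)
  qed simp
  also have "\<dots> = (\<Sum>i\<in>{0..card S}. (val i)^2 *
     (if i \<le> k - 1 then (card S choose i) * ((n - card S) choose (k - 1 - i)) else 0))"
  proof (rule sum.cong[OF refl])
    fix i assume "i \<in> {0..card S}"
    have "(\<Sum>E\<in>{E \<in> ?Ek. card (E \<inter> S) = i}. (val (card (E \<inter> S)))^2)
        = (\<Sum>E\<in>{E \<in> ?Ek. card (E \<inter> S) = i}. (val i)^2)" by (rule sum.cong) auto
    also have "\<dots> = (val i)^2 * card {E \<in> ?Ek. card (E \<inter> S) = i}" by simp
    also have "card {E \<in> ?Ek. card (E \<inter> S) = i} =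
       (if i \<le> k - 1 then (card S choose i) * ((n - card S) choose (k - 1 - i)) else 0)"
    proof (cases "i \<le> k - 1")
      case True
      have "{E \<in> ?Ek. card (E \<inter> S) = i} = {E. E \<subseteq> {1..n} \<and> card E = k - 1 \<and> card (E \<inter> S) = i}" by auto
      moreover have "card ({1..n} - S) = n - card S" using S fS by (simp add: card_Diff_subset)
      ultimately show ?thesis using count_split[OF _ S True] True by simp
    next
      case False
      have "{E \<in> ?Ek. card (E \<inter> S) = i} = {}"
      proof (rule ccontr)
        assume "{E \<in> ?Ek. card (E \<inter> S) = i} \<noteq> {}"
        then obtain E where E: "E \<subseteq> {1..n}" "card E = k - 1" "card (E \<inter> S) = i" by auto
        have "finite E" using E finite_subset by blast
        hence "card (E \<inter> S) \<le> card E" by (simp add: card_mono)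
        thus False using E False by simp
      qed
      thus ?thesis using False by simp
    qed
    finally show "(\<Sum>E\<in>{E \<in> ?Ek. card (E \<inter> S) = i}. (val (card (E \<inter> S)))^2) = (val i)^2 *
     (if i \<le> k - 1 then (card S choose i) * ((n - card S) choose (k - 1 - i)) else 0)" .
  qed
  finally show ?thesis unfolding val_def .
qed

lemma step4_poly:
  fixes a b :: nat
  shows "(b+2)*(a+2)*((a+1)*(b+2)+3) + (a+1)*((a+1)*(b+2)+2) = 2*(b+2)*(a+2)*(a+3) + (3*b + 2*b*b + 4*a + 7*a*b + 3*a*b*b + 2*a*a + 3*a*a*b + a*a*b*b)"
  by (simp add: algebra_simps)

lemma polyQ:
  fixes t s M :: nat
  assumes t: "1 \<le> t" and s: "2 \<le> s" and M: "t * s + 1 \<le> M"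
  shows "s * M * (M+1)^2 + t * M * (M+1) > s * t * (s - 1) * (M+1)^2 + 2 * s * (t + 1) * (t + 2) * M"
proof -
  obtain a where a: "t = a + 1" using t by (metis add.commute le_Suc_ex Suc_eq_plus1_left)
  obtain b where b: "s = b + 2" using s by (metis add.commute le_Suc_ex)
  have ts: "t * (s - 1) \<le> M" using M s by (simp add: algebra_simps)
  define V where "V = M - t * (s - 1)"
  have MV: "M = t * (s - 1) + V" using ts V_def by simp
  have V1: "t + 1 \<le> V" using M s unfolding V_def by (cases s) (auto simp: algebra_simps)
  have e1: "s * M * (M+1)^2 = s * t * (s - 1) * (M+1)^2 + s * V * (M+1)^2"
    by (subst MV) (simp add: algebra_simps)
  have e2: "s * (t+1) * (M+1)^2 \<le> s * V * (M+1)^2" using V1 by (intro mult_right_mono mult_left_mono) auto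
  have e3: "(M+1)^2 = M * (M+2) + 1" by (simp add: power2_eq_square algebra_simps)
  have k1: "s*(t+1)*(t*s+3) + t*(t*s+2) \<ge> 2*s*(t+1)*(t+2)"
    using step4_poly[of b a] unfolding a b by (simp add: algebra_simps)
  have k2: "s*(t+1)*(M+2) + t*(M+1) \<ge> s*(t+1)*(t*s+3) + t*(t*s+2)"
  proof -
    have h1: "t*s+3 \<le> M+2" and h2: "t*s+2 \<le> M+1" using M by auto
    show ?thesis using mult_le_mono2[OF h1, of "s*(t+1)"] mult_le_mono2[OF h2, of t] by linarith
  qed
  have k: "M * (s*(t+1)*(M+2) + t*(M+1)) \<ge> M * (2*s*(t+1)*(t+2))"
    using k1 k2 by (intro mult_left_mono) auto
  have "s * (t+1) * (M+1)^2 + t * M * (M+1) = M * (s*(t+1)*(M+2) + t*(M+1)) + s*(t+1)"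
    unfolding e3 by (simp add: algebra_simps)
  moreover have "s*(t+1) \<ge> 1" using s by simp
  ultimately have "s * (t+1) * (M+1)^2 + t * M * (M+1) > 2 * s * (t + 1) * (t + 2) * M"
    using k by (simp add: algebra_simps)
  thus ?thesis using e1 e2 by linarith
qed

lemma two_choose: "2 * ((t+2) choose t) = (t+2)*(t+1)"
proof (induction t)
  case 0 show ?case by simp
next
  case (Suc t)
  have a: "(Suc t + 2) choose Suc t = ((t+2) choose t) + ((t+2) choose Suc t)" by simp
  have b: "(t+2) choose Suc t = t+2" using binomial_symmetric[of 1 "t+2"] by simp
  show ?case using Suc a b by (simp add: algebra_simps)
qed

lemma coF:
  assumes "1 \<le> t" "t \<le> k" "k \<le> n"
  shows "co2 n k (fam n k {1..t} 0) = (n-k+1)^2 * (if t < k then (n-t) choose (k-1-t) else 0) + t * ((n-t) choose (k-t))"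
proof -
  define f where "f i = (if t \<le> i + 0 then n - k + 1 else if t = i + 0 + 1 then 0 + 1 else 0)^2 *
     (if i \<le> k - 1 then (t choose i) * ((n - t) choose (k - 1 - i)) else 0)" for i
  have "co2 n k (fam n k {1..t} 0) = sum f {0..t}"
  proof -
    have c: "card {1..t} = t" by simp
    show ?thesis using co2_fam[of "{1..t}" n k 0, unfolded c] assms unfolding f_def by simp
  qed
  also have "\<dots> = sum f {t-1, t}"
    by (rule sum.mono_neutral_right) (auto simp: f_def)
  also have "\<dots> = f (t-1) + f t" using assms by simp
  also have "\<dots> = (n-k+1)^2 * (if t < k then (n-t) choose (k-1-t) else 0) + t * ((n-t) choose (k-t))"
  proof -
    have ct: "t choose (t-1) = t" using binomial_symmetric[of 1 t] assms by simp
    have kt: "k - 1 - (t - 1) = k - t" using assms by simp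
    show ?thesis using assms ct kt unfolding f_def by auto
  qed
  finally show ?thesis .
qed

lemma coG:
  assumes "1 \<le> t" "t + 1 \<le> k" "k \<le> n" "t + 2 \<le> n"
  shows "co2 n k (fam n k {1..t+2} 1) = (n-k+1)^2 * ((if t + 3 \<le> k then (n-t-2) choose (k-t-3) else 0)
      + (if t + 2 \<le> k then (t+2) * ((n-t-2) choose (k-t-2)) else 0))
      + 2 * (t+2) * (t+1) * ((n-t-2) choose (k-1-t))"
proof -
  define f where "f i = (if t + 2 \<le> i + 1 then n - k + 1 else if t + 2 = i + 1 + 1 then 1 + 1 else 0)^2 *
     (if i \<le> k - 1 then ((t+2) choose i) * ((n - (t+2)) choose (k - 1 - i)) else 0)" for i
  have "co2 n k (fam n k {1..t+2} 1) = sum f {0..t+2}"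
  proof -
    have c: "card {1..t+2} = t+2" by simp
    show ?thesis using co2_fam[of "{1..t+2}" n k 1, unfolded c] assms unfolding f_def by simp
  qed
  also have "\<dots> = sum f {t, t+1, t+2}"
    by (rule sum.mono_neutral_right) (auto simp: f_def)
  also have "\<dots> = f t + f (t+1) + f (t+2)" by simp
  also have "f t + f (t+1) + f (t+2) = (n-k+1)^2 * ((if t + 3 \<le> k then (n-t-2) choose (k-t-3) else 0)
      + (if t + 2 \<le> k then (t+2) * ((n-t-2) choose (k-t-2)) else 0))
      + 2 * (t+2) * (t+1) * ((n-t-2) choose (k-1-t))"
  proof -
    have "f t = 4 * ((t+2) choose t) * ((n-t-2) choose (k-1-t))" using assms by (auto simp: f_def power2_eq_square)
    also have "\<dots> = 2 * (2 * ((t+2) choose t)) * ((n-t-2) choose (k-1-t))" by simp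
    also have "\<dots> = 2 * (t+2) * (t+1) * ((n-t-2) choose (k-1-t))" by (simp only: two_choose)
    finally have ft: "f t = 2 * (t+2) * (t+1) * ((n-t-2) choose (k-1-t))" .
    have cc: "(t+2) choose (t+1) = t+2" using binomial_symmetric[of 1 "t+2"] by simp
    have ft1: "f (t+1) = (n-k+1)^2 * (if t + 2 \<le> k then (t+2) * ((n-t-2) choose (k-t-2)) else 0)"
      using assms cc by (auto simp: f_def)
    have e3: "k - Suc (Suc (Suc t)) = k - (t+3)" by simp
    have ft2: "f (t+2) = (n-k+1)^2 * (if t + 3 \<le> k then (n-t-2) choose (k-t-3) else 0)"
      using assms by (auto simp: f_def e3)
    show ?thesis unfolding ft ft1 ft2 by (simp add: algebra_simps)
  qed
  finally show ?thesis .
qed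

lemma strict_case:
  fixes t a j :: nat
  assumes t: "1 \<le> t" and M: "t*(j+2)+1 \<le> a - j"
  shows "(a-j+1)^2 * ((if 1 \<le> j then a choose (j-1) else 0) + (t+2) * (a choose j))
           + 2*(t+2)*(t+1) * (a choose (j+1))
         < (a-j+1)^2 * ((a+2) choose (j+1)) + t * ((a+2) choose (j+2))"
proof -
  define M where "M = a - j"
  define D where "D = M + 1"
  define x where "x = a choose j"
  define y where "y = a choose (j+1)"
  define z where "z = (a+2) choose (j+2)"
  define w where "w = (if 1 \<le> j then a choose (j-1) else 0)"
  have ja: "j + 1 \<le> a" using M t by (simp add: algebra_simps)
  have pas: "(a+2) choose (j+1) = y + 2*x + w"
  proof (cases j)
    case 0 thus ?thesis by (simp add: x_def y_def w_def)
  next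
    case (Suc j')
    have "(a+2) choose (j+1) = ((a+1) choose j) + ((a+1) choose (j+1))" by simp
    also have "(a+1) choose (j+1) = x + y" unfolding x_def y_def by simp
    also have "(a+1) choose j = w + x" unfolding w_def x_def using Suc by simp
    finally show ?thesis by simp
  qed
  have rel1: "M * x = (j+1) * y"
  proof -
    have "M * x = a * ((a-1) choose j)" unfolding M_def x_def by (rule binomial_absorb_comp)
    also have "\<dots> = (j+1) * y" unfolding y_def using binomial_absorption[of j a] by simp
    finally show ?thesis .
  qed
  have rel2: "(j+2) * z = (a+2) * ((a+1) choose (j+1))"
    unfolding z_def using Suc_times_binomial[of "j+1" "a+1"] by simp
  have ymono: "y \<le> (a+1) choose (j+1)" unfolding y_def by (rule binomial_right_mono) simp
  have ypos: "0 < y" unfolding y_def using ja by simp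
  have Dle: "D \<le> a + 2" unfolding D_def M_def by simp
  have Mpos: "0 < M" using M t unfolding M_def by simp
  have Q: "(j+2) * M * D^2 + t * M * D > (j+2) * t * (j+1) * D^2 + 2 * (j+2) * (t + 1) * (t + 2) * M"
  proof -
    have M': "t * (j+2) + 1 \<le> M" using M unfolding M_def .
    have e: "j + 2 - 1 = j + 1" by simp
    show ?thesis using polyQ[of t "j+2" M, OF t _ M'] unfolding D_def e by simp
  qed
  have L: "(j+2) * M * (D^2 * y + t * z) \<ge> y * ((j+2) * M * D^2 + t * M * D)"
  proof -
    have "t * M * (D * y) \<le> t * M * ((a+2) * ((a+1) choose (j+1)))"
      using Dle ymono by (intro mult_le_mono2 mult_le_mono) auto
    also have "\<dots> = t * M * ((j+2) * z)" using rel2 by simp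
    finally have "t * M * (D * y) \<le> t * M * ((j+2) * z)" .
    thus ?thesis by (simp add: algebra_simps)
  qed
  have R: "(j+2) * M * (D^2 * t * x + 2*(t+2)*(t+1) * y) = y * ((j+2) * t * (j+1) * D^2 + 2 * (j+2) * (t + 1) * (t + 2) * M)"
  proof -
    have "(j+2) * M * (D^2 * t * x) = (j+2) * t * D^2 * (M * x)" by (simp add: algebra_simps)
    also have "\<dots> = (j+2) * t * D^2 * ((j+1) * y)" using rel1 by simp
    finally show ?thesis by (simp add: algebra_simps)
  qed
  have "y * ((j+2) * t * (j+1) * D^2 + 2 * (j+2) * (t + 1) * (t + 2) * M) < y * ((j+2) * M * D^2 + t * M * D)"
    using Q ypos by simp
  hence "(j+2) * M * (D^2 * t * x + 2*(t+2)*(t+1) * y) < (j+2) * M * (D^2 * y + t * z)"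
    using L R by linarith
  hence key: "D^2 * t * x + 2*(t+2)*(t+1) * y < D^2 * y + t * z"
    using mult_less_cancel1 by blast
  have "D^2 * (w + (t+2) * x) + 2*(t+2)*(t+1) * y < D^2 * (y + 2*x + w) + t * z"
    using key by (simp add: algebra_simps)
  from this[unfolded pas[symmetric]] show ?thesis unfolding D_def M_def x_def y_def z_def w_def .
qed

lemma iso_case:
  fixes t n :: nat
  assumes t: "1 \<le> t" and n: "n = 2*t+2"
  shows "iso_fam n {F \<in> ksubsets n (t+1). {1..t} \<subseteq> F}
           ((\<lambda>G. {1..n} - G) ` {G \<in> ksubsets n (t+1). t + 1 \<le> card (G \<inter> {1..t+2})})"
proof -
  have charF: "{F \<in> ksubsets n (t+1). {1..t} \<subseteq> F} = (\<lambda>x. insert x {1..t}) ` {t+1..n}"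
  proof (rule set_eqI, rule iffI)
    fix X assume "X \<in> {F \<in> ksubsets n (t+1). {1..t} \<subseteq> F}"
    hence X: "X \<subseteq> {1..n}" "card X = t+1" "{1..t} \<subseteq> X" by (auto simp: ksubsets_def)
    have fX: "finite X" using X finite_subset by blast
    have "card (X - {1..t}) = 1" using X fX by (simp add: card_Diff_subset)
    then obtain x where x: "X - {1..t} = {x}" using card_1_singletonE by blast
    hence "X = insert x {1..t}" using X by blast
    moreover have "x \<in> {t+1..n}"
    proof -
      have "x \<in> X" "x \<notin> {1..t}" using x by auto
      moreover hence "x \<in> {1..n}" using X by auto
      ultimately show ?thesis by auto
    qed
    ultimately show "X \<in> (\<lambda>x. insert x {1..t}) ` {t+1..n}" by blast
  next
    fix X assume "X \<in> (\<lambda>x. insert x {1..t}) ` {t+1..n}"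
    then obtain x where x: "x \<in> {t+1..n}" "X = insert x {1..t}" by auto
    have "card X = t + 1" using x by simp
    thus "X \<in> {F \<in> ksubsets n (t+1). {1..t} \<subseteq> F}" using x n by (auto simp: ksubsets_def)
  qed
  have charG: "{G \<in> ksubsets n (t+1). t + 1 \<le> card (G \<inter> {1..t+2})} = (\<lambda>y. {1..t+2} - {y}) ` {1..t+2}"
  proof (rule set_eqI, rule iffI)
    fix X assume "X \<in> {G \<in> ksubsets n (t+1). t + 1 \<le> card (G \<inter> {1..t+2})}"
    hence X: "X \<subseteq> {1..n}" "card X = t+1" "t + 1 \<le> card (X \<inter> {1..t+2})" by (auto simp: ksubsets_def)
    have fX: "finite X" using X finite_subset by blast
    have "card (X \<inter> {1..t+2}) \<le> card X" using fX by (simp add: card_mono)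
    hence "X \<inter> {1..t+2} = X" using X fX by (intro card_subset_eq) auto
    hence sub: "X \<subseteq> {1..t+2}" by blast
    hence "card ({1..t+2} - X) = 1" using X fX by (simp add: card_Diff_subset)
    then obtain y where y: "{1..t+2} - X = {y}" using card_1_singletonE by blast
    hence "X = {1..t+2} - {y}" using sub by blast
    moreover have "y \<in> {1..t+2}" using y by auto
    ultimately show "X \<in> (\<lambda>y. {1..t+2} - {y}) ` {1..t+2}" by blast
  next
    fix X assume "X \<in> (\<lambda>y. {1..t+2} - {y}) ` {1..t+2}"
    then obtain y where y: "y \<in> {1..t+2}" "X = {1..t+2} - {y}" by auto
    have cX: "card X = t + 1" using y by simp
    have sub: "X \<subseteq> {1..t+2}" using y by blast
    hence iX: "X \<inter> {1..t+2} = X" by (rule Int_absorb2)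
    have "{1..t+2} \<subseteq> {1..n}" using n by simp
    hence "X \<subseteq> {1..n}" using sub by (rule subset_trans[rotated])
    thus "X \<in> {G \<in> ksubsets n (t+1). t + 1 \<le> card (G \<inter> {1..t+2})}"
      unfolding ksubsets_def mem_Collect_eq iX cX by simp
  qed
  have Gc: "(\<lambda>G. {1..n} - G) ` ((\<lambda>y. {1..t+2} - {y}) ` {1..t+2}) = (\<lambda>y. insert y {t+3..n}) ` {1..t+2}"
    unfolding image_image
  proof (rule image_cong[OF refl])
    fix y assume "y \<in> {1..t+2}"
    thus "{1..n} - ({1..t+2} - {y}) = insert y {t+3..n}" using n by auto
  qed
  define \<sigma> where "\<sigma> i = (if i \<le> t then i + t + 2 else i - t)" for i :: nat
  define \<tau> where "\<tau> i = (if i \<le> t + 2 then i + t else i - t - 2)" for i :: nat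
  have bij: "bij_betw \<sigma> {1..n} {1..n}"
  proof (rule bij_betw_byWitness[where f'=\<tau>])
    show "\<forall>a\<in>{1..n}. \<tau> (\<sigma> a) = a"
    proof
      fix a assume a: "a \<in> {1..n}"
      show "\<tau> (\<sigma> a) = a"
      proof (cases "a \<le> t")
        case True thus ?thesis using a unfolding \<sigma>_def \<tau>_def by simp
      next
        case False thus ?thesis using a n unfolding \<sigma>_def \<tau>_def by simp
      qed
    qed
    show "\<forall>a\<in>{1..n}. \<sigma> (\<tau> a) = a"
    proof
      fix a assume a: "a \<in> {1..n}"
      show "\<sigma> (\<tau> a) = a"
      proof (cases "a \<le> t + 2")
        case True thus ?thesis using a unfolding \<sigma>_def \<tau>_def by simp
      next
        case False
        hence h: "\<tau> a = a - t - 2" "a - t - 2 \<le> t" using a n unfolding \<tau>_def by auto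
        thus ?thesis using False unfolding \<sigma>_def by simp
      qed
    qed
    show "\<sigma> ` {1..n} \<subseteq> {1..n}"
    proof
      fix b assume "b \<in> \<sigma> ` {1..n}"
      then obtain a where a: "a \<in> {1..n}" "b = \<sigma> a" by blast
      show "b \<in> {1..n}"
      proof (cases "a \<le> t")
        case True thus ?thesis using a n unfolding \<sigma>_def by simp
      next
        case False thus ?thesis using a n unfolding \<sigma>_def by auto
      qed
    qed
    show "\<tau> ` {1..n} \<subseteq> {1..n}"
    proof
      fix b assume "b \<in> \<tau> ` {1..n}"
      then obtain a where a: "a \<in> {1..n}" "b = \<tau> a" by blast
      show "b \<in> {1..n}"
      proof (cases "a \<le> t + 2")
        case True thus ?thesis using a n unfolding \<tau>_def by simp
      next
        case False thus ?thesis using a n unfolding \<tau>_def by auto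
      qed
    qed
  qed
  have s1: "\<sigma> ` {1..t} = {t+3..n}"
  proof (rule set_eqI, rule iffI)
    fix y assume "y \<in> \<sigma> ` {1..t}" thus "y \<in> {t+3..n}" using n by (auto simp: \<sigma>_def)
  next
    fix y assume y: "y \<in> {t+3..n}"
    hence "\<sigma> (y - t - 2) = y" "y - t - 2 \<in> {1..t}" using n by (auto simp: \<sigma>_def)
    thus "y \<in> \<sigma> ` {1..t}" by (metis image_eqI)
  qed
  have s2: "(\<lambda>x. x - t) ` {t+1..n} = {1..t+2}"
  proof (rule set_eqI, rule iffI)
    fix y assume "y \<in> (\<lambda>x. x - t) ` {t+1..n}" thus "y \<in> {1..t+2}" using n by auto
  next
    fix y assume y: "y \<in> {1..t+2}"
    hence "y + t - t = y" "y + t \<in> {t+1..n}" using n by auto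
    thus "y \<in> (\<lambda>x. x - t) ` {t+1..n}" by (metis image_eqI)
  qed
  have "(\<lambda>X. \<sigma> ` X) ` ((\<lambda>x. insert x {1..t}) ` {t+1..n}) = (\<lambda>x. insert (x - t) {t+3..n}) ` {t+1..n}"
    unfolding image_image
  proof (rule image_cong[OF refl])
    fix x assume "x \<in> {t+1..n}"
    hence "\<sigma> x = x - t" by (simp add: \<sigma>_def)
    thus "\<sigma> ` insert x {1..t} = insert (x - t) {t+3..n}" using s1 by simp
  qed
  also have "\<dots> = (\<lambda>y. insert y {t+3..n}) ` ((\<lambda>x. x - t) ` {t+1..n})" by (simp add: image_image)
  also have "\<dots> = (\<lambda>y. insert y {t+3..n}) ` {1..t+2}" using s2 by simp
  finally have img: "(\<lambda>X. \<sigma> ` X) ` ((\<lambda>x. insert x {1..t}) ` {t+1..n}) = (\<lambda>y. insert y {t+3..n}) ` {1..t+2}" .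
  show ?thesis unfolding iso_fam_def charF charG Gc
    by (rule exI[of _ \<sigma>]) (simp only: bij img simp_thms)
qed


lemma sub_iff:
  assumes "finite X"
  shows "({1..t} \<subseteq> X) = (t \<le> card (X \<inter> {1..t}))"
proof
  assume "{1..t} \<subseteq> X"
  hence "X \<inter> {1..t} = {1..t}" by blast
  thus "t \<le> card (X \<inter> {1..t})" by simp
next
  assume h: "t \<le> card (X \<inter> {1..t})"
  have "card (X \<inter> {1..t}) \<le> card {1..t::nat}" by (rule card_mono) auto
  hence "card (X \<inter> {1..t}) = card {1..t::nat}" using h by simp
  hence "X \<inter> {1..t} = {1..t}" by (intro card_subset_eq) auto
  thus "{1..t} \<subseteq> X" by blast
qed

theorem lemma4p4:
  fixes t k n :: nat
  assumes "0 < t" "t \<le> k" "k \<le> n" "(t + 1) * (k - t + 1) \<le> n"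
  defines "\<F> \<equiv> {F \<in> ksubsets n k. {1..t} \<subseteq> F}"
      and "\<G> \<equiv> {G \<in> ksubsets n k. t + 1 \<le> card (G \<inter> {1..t+2})}"
  shows "co2 n k \<G> \<le> co2 n k \<F> \<and>
         (co2 n k \<G> = co2 n k \<F> \<longrightarrow>
           (k = t + 1 \<and> n = 2 * t + 2 \<and> iso_fam n \<F> ((\<lambda>G. {1..n} - G) ` \<G>)))"
proof -
  have t: "1 \<le> t" using assms(1) by simp
  have famF: "\<F> = fam n k {1..t} 0"
  proof -
    have "\<And>X. X \<in> ksubsets n k \<Longrightarrow> ({1..t} \<subseteq> X) = (card {1..t} \<le> card (X \<inter> {1..t}) + 0)"
    proof -
      fix X assume "X \<in> ksubsets n k"
      hence "finite X" unfolding ksubsets_def using finite_subset by blast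
      thus "({1..t} \<subseteq> X) = (card {1..t} \<le> card (X \<inter> {1..t}) + 0)" using sub_iff by simp
    qed
    thus ?thesis unfolding \<F>_def fam_def by blast
  qed
  have famG: "\<G> = fam n k {1..t+2} 1"
    unfolding \<G>_def fam_def by auto
  have coFf: "co2 n k \<F> = (n-k+1)^2 * (if t < k then (n-t) choose (k-1-t) else 0) + t * ((n-t) choose (k-t))"
    unfolding famF using coF[OF t assms(2,3)] .
  show ?thesis
  proof (cases "k = t")
    case True
    have "\<G> = {}"
    proof (rule ccontr)
      assume "\<G> \<noteq> {}"
      then obtain X where X: "X \<subseteq> {1..n}" "card X = t" "t + 1 \<le> card (X \<inter> {1..t+2})"
        unfolding \<G>_def ksubsets_def using True by auto
      have "finite X" using X finite_subset by blast
      hence "card (X \<inter> {1..t+2}) \<le> card X" by (simp add: card_mono)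
      thus False using X by simp
    qed
    hence G0: "co2 n k \<G> = 0" unfolding co2_def deg_def by simp
    have "co2 n k \<F> = t" using coFf True by simp
    thus ?thesis using G0 t by simp
  next
    case False
    hence kt: "t + 1 \<le> k" using assms(2) by simp
    have "(t+1) * 2 \<le> (t + 1) * (k - t + 1)" using kt by (intro mult_le_mono2) simp
    hence n2: "2 * t + 2 \<le> n" using assms(4) by simp
    have coGf: "co2 n k \<G> = (n-k+1)^2 * ((if t + 3 \<le> k then (n-t-2) choose (k-t-3) else 0)
      + (if t + 2 \<le> k then (t+2) * ((n-t-2) choose (k-t-2)) else 0))
      + 2 * (t+2) * (t+1) * ((n-t-2) choose (k-1-t))"
      unfolding famG using coG[OF t kt assms(3)] n2 by simp
    show ?thesis
    proof (cases "k = t + 1")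
      case True
      define N where "N = n - t"
      have e: "n - k + 1 = N" "k - 1 - t = 0" "k - t = 1" "n - t = N" using True n2 unfolding N_def by auto
      have nN: "n = N + t" using n2 unfolding N_def by simp
      have "co2 n k \<F> = N^2 + t * N" using coFf True unfolding e by simp
      also have "\<dots> = N * n" unfolding nN by (simp add: power2_eq_square algebra_simps)
      finally have cF: "co2 n k \<F> = N * n" .
      have cG: "co2 n k \<G> = (t+2) * (2*t+2)" using coGf True by (simp add: algebra_simps)
      have N2: "t + 2 \<le> N" using n2 unfolding N_def by simp
      have le: "(t+2) * (2*t+2) \<le> N * n" using N2 n2 by (rule mult_le_mono)
      have eq: "n = 2 * t + 2" if "(t+2) * (2*t+2) = N * n"
      proof (rule ccontr)
        assume "n \<noteq> 2 * t + 2"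
        hence "2 * t + 2 < n" using n2 by simp
        hence "(t+2) * (2*t+2) < N * n" using N2 by (intro mult_le_less_imp_less) auto
        thus False using that by simp
      qed
      show ?thesis
      proof (intro conjI impI)
        show "co2 n k \<G> \<le> co2 n k \<F>" using cF cG le by simp
      next
        assume "co2 n k \<G> = co2 n k \<F>"
        hence n22: "n = 2 * t + 2" using eq cF cG by simp
        show "k = t + 1" by (rule True)
        show "n = 2 * t + 2" by (rule n22)
        show "iso_fam n \<F> ((\<lambda>G. {1..n} - G) ` \<G>)"
          unfolding \<F>_def \<G>_def True using iso_case[OF t n22] .
      qed
    next
      case False
      hence kt2: "t + 2 \<le> k" using kt by simp
      obtain j where j: "k = t + 2 + j" using kt2 le_Suc_ex by blast
      obtain a where a: "n = t + 2 + a" using n2 le_Suc_ex[of "t+2" n] by auto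
      have M: "t*(j+2)+1 \<le> a - j"
      proof -
        have "k - t + 1 = j + 3" using j by simp
        hence "(t+1)*(j+3) \<le> n" using assms(4) by (simp only:)
        hence "t*j + 3*t + j + 3 \<le> t + 2 + a" using a by (simp add: algebra_simps)
        thus ?thesis by (simp add: algebra_simps)
      qed
      have st: "co2 n k \<G> < co2 n k \<F>"
      proof -
        have e1: "n - k + 1 = a - j + 1" using a j by simp
        have cF: "co2 n k \<F> = (a-j+1)^2 * ((a+2) choose (j+1)) + t * ((a+2) choose (j+2))"
          using coFf a j by (simp add: e1)
        have cG: "co2 n k \<G> = (a-j+1)^2 * ((if 1 \<le> j then a choose (j-1) else 0) + (t+2) * (a choose j))
           + 2*(t+2)*(t+1) * (a choose (j+1))"
        proof -
          have q: "(t + 3 \<le> k) = (1 \<le> j)" "k - t - 3 = j - 1" "k - t - 2 = j" "k - 1 - t = j + 1" "n - t - 2 = a"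
             "(t + 2 \<le> k) = True"
            using a j by auto
          from coGf[unfolded q e1 if_True] show ?thesis .
        qed
        show ?thesis unfolding cF cG by (rule strict_case[OF t M])
      qed
      thus ?thesis by simp
    qed
  qed
qed

end
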